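(* For every $n\in\mathbb N$, $s>0$ and $\varepsilon\le n^{-1}$, given knowledge of $n$, there is a probabilistic online $s$-bounded monotone partition of update sequences of up to $n$ points on the real line that is $(O(1),\varepsilon,O(n\varepsilon))$-smooth at every time $t$. Moreover, if no pair of points in $V_t$ has distance in $[\varepsilon s,s]$, the partition is $0$-smooth at all times.
   Context: The real line carries the metric $d(u,v)=|u-v|$. An update sequence on it is a sequence $(v_t,o_t)\in\mathbb R\times\{+,-\}$ ($v_t$ arrives if $o_t=+$, leaves if $o_t=-$), with alive sets $L_0=\varnothing$, $L_t=L_{t-1}\cup\{v_t\}$ or $L_{t-1}\setminus\{v_t\}$, and $V_t=\{v_j:j\le t,o_j=+\}$. A partition $P$ of a set $V$ is a family of disjoint nonempty clusters with union $V$; $P(v)$ is the cluster of $v$; $s$-bounded means every cluster has diameter at most $s$. An online monotone partition outputs for each $t$ a partition $P_t$ of $L_t$ depending only on $\sigma_1,\dots,\sigma_t$, such that for $u,w\in L_t\cap L_{t+1}$, $P_t(u)=P_t(w)$ implies $P_{t+1}(u)=P_{t+1}(w)$; a probabilistic online $s$-bounded monotone partition is a distribution over online monotone partitions all of whose partitions are $s$-bounded. A probabilistic $s$-bounded partition $P$ is $(\delta,\varepsilon,\gamma)$-smooth if for all $u,v$: $d(u,v)\le s$ implies $\Pr[P(u)\ne P(v)]\le\delta d(u,v)/s$, and $d(u,v)\le\varepsilon s$ implies $\Pr[P(u)\ne P(v)]\le\delta\gamma d(u,v)/s$; $0$-smooth means $\Pr[P(u)\ne P(v)]=0$ whenever $d(u,v)\le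 s$. *)

theory Defs
  imports "HOL-Probability.Probability" "HOL-Library.Disjoint_Sets"
begin

text \<open>An update is a pair (v, o); o = True means arrival (+), o = False means departure (-).
  A finite update sequence sigma_1..sigma_t is a list; the time-t prefix is the list itself.\<close>

type_synonym update = "real \<times> bool"

definition alive :: "update list \<Rightarrow> real set" where
  "alive xs = fold (\<lambda>(v, arr) L. if arr then insert v L else L - {v}) xs {}"

definition arrived :: "update list \<Rightarrow> real set" where
  "arrived xs = {v. (v, True) \<in> set xs}"

definition cluster :: "real set set \<Rightarrow> real \<Rightarrow> real set" where
  "cluster P v = (THE C. C \<in> P \<and> v \<in> C)"

definition s_bounded :: "real \<Rightarrow> real set set \<Rightarrow> bool" where
  "s_bounded s P \<longleftrightarrow> (\<forall>C\<in>P. diameter C \<le> s)"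

text \<open>An online s-bounded monotone partition for update sequences of up to n points:
  A maps each prefix sigma_1..sigma_t (so it depends only on these) to the partition P_t.\<close>
definition online_mono_partition :: "nat \<Rightarrow> real \<Rightarrow> (update list \<Rightarrow> real set set) \<Rightarrow> bool" where
  "online_mono_partition n s A \<longleftrightarrow>
     (\<forall>xs. card (arrived xs) \<le> n \<longrightarrow> partition_on (alive xs) (A xs) \<and> s_bounded s (A xs)) \<and>
     (\<forall>xs x. card (arrived (xs @ [x])) \<le> n \<longrightarrow>
        (\<forall>u\<in>alive xs \<inter> alive (xs @ [x]). \<forall>w\<in>alive xs \<inter> alive (xs @ [x]).
           cluster (A xs) u = cluster (A xs) w \<longrightarrow>
           cluster (A (xs @ [x])) u = cluster (A (xs @ [x])) w))"

definition sep_event ::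
  "(update list \<Rightarrow> real set set) measure \<Rightarrow> update list \<Rightarrow> real \<Rightarrow> real \<Rightarrow> (update list \<Rightarrow> real set set) set" where
  "sep_event M xs u v = {A \<in> space M. cluster (A xs) u \<noteq> cluster (A xs) v}"

text \<open>A probabilistic online s-bounded monotone partition: a probability distribution M over
  online s-bounded monotone partitions (all of them, not just almost all), with measurable
  separation events.\<close>
definition prob_online_partition ::
  "nat \<Rightarrow> real \<Rightarrow> (update list \<Rightarrow> real set set) measure \<Rightarrow> bool" where
  "prob_online_partition n s M \<longleftrightarrow>
     prob_space M \<and> (\<forall>A\<in>space M. online_mono_partition n s A) \<and>
     (\<forall>xs u v. card (arrived xs) \<le> n \<longrightarrow> u \<in> alive xs \<longrightarrow> v \<in> alive xs \<longrightarrow>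
        sep_event M xs u v \<in> sets M)"

definition smooth_at ::
  "(update list \<Rightarrow> real set set) measure \<Rightarrow> real \<Rightarrow> real \<Rightarrow> real \<Rightarrow> real \<Rightarrow> update list \<Rightarrow> bool" where
  "smooth_at M s \<delta> \<epsilon> \<gamma> xs \<longleftrightarrow>
     (\<forall>u\<in>alive xs. \<forall>v\<in>alive xs.
        (\<bar>u - v\<bar> \<le> s \<longrightarrow> measure M (sep_event M xs u v) \<le> \<delta> * \<bar>u - v\<bar> / s) \<and>
        (\<bar>u - v\<bar> \<le> \<epsilon> * s \<longrightarrow> measure M (sep_event M xs u v) \<le> \<delta> * \<gamma> * \<bar>u - v\<bar> / s))"

definition zero_smooth_at ::
  "(update list \<Rightarrow> real set set) measure \<Rightarrow> real \<Rightarrow> update list \<Rightarrow> bool" where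
  "zero_smooth_at M s xs \<longleftrightarrow>
     (\<forall>u\<in>alive xs. \<forall>v\<in>alive xs. \<bar>u - v\<bar> \<le> s \<longrightarrow> measure M (sep_event M xs u v) = 0)"

end

theory Submission
  imports Defs
begin

lemma alive_snoc: "alive (xs @ [(p,b)]) = (if b then insert p (alive xs) else alive xs - {p})"
  by (simp add: alive_def)

lemma arrived_snoc: "arrived (xs @ [(p,b)]) = (if b then insert p (arrived xs) else arrived xs)"
  by (auto simp: arrived_def)

lemma arrived_Nil[simp]: "arrived [] = {}" by (simp add: arrived_def)
lemma alive_Nil[simp]: "alive [] = {}" by (simp add: alive_def)

lemma alive_sub_arrived: "alive xs \<subseteq> arrived xs"
proof (induction xs rule: rev_induct)
  case Nil then show ?case by simp
next
  case (snoc x xs) then show ?case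
    by (cases x) (auto simp: alive_snoc arrived_snoc)
qed

lemma finite_arrived: "finite (arrived xs)"
proof -
  have "arrived xs \<subseteq> fst ` set xs" by (force simp: arrived_def)
  then show ?thesis using finite_subset by blast
qed

lemma arrived_mono_append: "arrived xs \<subseteq> arrived (xs @ ys)"
  by (auto simp: arrived_def)

definition step :: "(real \<Rightarrow> int) \<Rightarrow> real \<Rightarrow> real set \<Rightarrow> real \<Rightarrow> int set \<Rightarrow> int set" where
"step cl \<tau> S p M = (let j = cl p;
   M1 = (if (\<exists>q\<in>S. cl q = j - 1 \<and> \<bar>p - q\<bar> < \<tau>) \<and> j - 1 \<notin> M \<and> j + 1 \<notin> M then insert j M else M)
 in if (\<exists>q\<in>S. cl q = j + 1 \<and> \<bar>p - q\<bar> < \<tau>) \<and> j \<notin> M1 \<and> j + 2 \<notin> M1 then insert (j+1) M1 else M1)"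

fun Mrev :: "(real \<Rightarrow> int) \<Rightarrow> real \<Rightarrow> update list \<Rightarrow> int set" where
"Mrev cl \<tau> [] = {}" |
"Mrev cl \<tau> (x#ys) = (if snd x then step cl \<tau> (arrived (rev ys)) (fst x) (Mrev cl \<tau> ys) else Mrev cl \<tau> ys)"

definition Mst :: "(real \<Rightarrow> int) \<Rightarrow> real \<Rightarrow> update list \<Rightarrow> int set" where
"Mst cl \<tau> xs = Mrev cl \<tau> (rev xs)"

lemma Mst_Nil[simp]: "Mst cl \<tau> [] = {}" by (simp add: Mst_def)
lemma Mst_snoc: "Mst cl \<tau> (xs @ [(p,b)]) = (if b then step cl \<tau> (arrived xs) p (Mst cl \<tau> xs) else Mst cl \<tau> xs)"
  by (simp add: Mst_def)

definition valid :: "int set \<Rightarrow> bool" where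
"valid M \<longleftrightarrow> (\<forall>k. \<not> (k \<in> M \<and> k + 1 \<in> M))"

lemma step_mono: "M \<subseteq> step cl \<tau> S p M"
  by (auto simp: step_def Let_def)

lemma step_valid: "valid M \<Longrightarrow> valid (step cl \<tau> S p M)"
  unfolding step_def Let_def valid_def
  apply (simp only: split: if_split)
  apply (intro conjI impI allI)
  apply (auto simp: algebra_simps)
  apply (metis add.commute add_diff_cancel_left' add.assoc one_add_one)+
  done

lemma Mst_valid: "valid (Mst cl \<tau> xs)"
proof (induction xs rule: rev_induct)
  case Nil then show ?case by (simp add: valid_def)
next
  case (snoc x xs) then show ?case
    by (cases x) (auto simp: Mst_snoc intro: step_valid)
qed

lemma Mst_mono_snoc: "Mst cl \<tau> xs \<subseteq> Mst cl \<tau> (xs @ [x])"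
  by (cases x) (auto simp: Mst_snoc intro: step_mono[THEN subsetD])

lemma Mst_bridge:
  "k \<in> Mst cl \<tau> xs \<Longrightarrow> \<exists>x\<in>arrived xs. \<exists>y\<in>arrived xs. cl x = k - 1 \<and> cl y = k \<and> \<bar>y - x\<bar> < \<tau>"
proof (induction xs arbitrary: k rule: rev_induct)
  case Nil then show ?case by simp
next
  case (snoc x xs)
  obtain p b where x: "x = (p,b)" by (cases x)
  show ?case
  proof (cases "b \<and> k \<notin> Mst cl \<tau> xs")
    case False
    then have "k \<in> Mst cl \<tau> xs" using snoc.prems by (auto simp: x Mst_snoc)
    from snoc.IH[OF this] show ?thesis using arrived_mono_append[of xs "[x]"] by blast
  next
    case True
    then have b: b and kn: "k \<notin> Mst cl \<tau> xs" by auto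
    have kin: "k \<in> step cl \<tau> (arrived xs) p (Mst cl \<tau> xs)" using snoc.prems b by (simp add: x Mst_snoc)
    have pa: "p \<in> arrived (xs @ [x])" by (simp add: x b arrived_snoc)
    have sub: "arrived xs \<subseteq> arrived (xs @ [x])" by (rule arrived_mono_append)
    have "(k = cl p \<and> (\<exists>q\<in>arrived xs. cl q = cl p - 1 \<and> \<bar>p - q\<bar> < \<tau>)) \<or>
          (k = cl p + 1 \<and> (\<exists>q\<in>arrived xs. cl q = cl p + 1 \<and> \<bar>p - q\<bar> < \<tau>))"
    proof -
      define M where "M = Mst cl \<tau> xs"
      define j where "j = cl p"
      define M1 where "M1 = (if (\<exists>q\<in>arrived xs. cl q = j - 1 \<and> \<bar>p - q\<bar> < \<tau>) \<and> j - 1 \<notin> M \<and> j + 1 \<notin> M then insert j M else M)"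
      have st: "step cl \<tau> (arrived xs) p M = (if (\<exists>q\<in>arrived xs. cl q = j + 1 \<and> \<bar>p - q\<bar> < \<tau>) \<and> j \<notin> M1 \<and> j + 2 \<notin> M1 then insert (j+1) M1 else M1)"
        by (simp only: step_def Let_def j_def M1_def)
      have k1: "k \<in> M1 \<Longrightarrow> k = j \<and> (\<exists>q\<in>arrived xs. cl q = j - 1 \<and> \<bar>p - q\<bar> < \<tau>)"
        using kn unfolding M1_def M_def by (auto split: if_splits)
      have "k \<in> M1 \<or> (k = j + 1 \<and> (\<exists>q\<in>arrived xs. cl q = j + 1 \<and> \<bar>p - q\<bar> < \<tau>))"
        using kin unfolding M_def[symmetric] st by (auto split: if_splits)
      then show ?thesis using k1 by (auto simp: j_def)
    qed
    then show ?thesis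
    proof
      assume "k = cl p \<and> (\<exists>q\<in>arrived xs. cl q = cl p - 1 \<and> \<bar>p - q\<bar> < \<tau>)"
      then obtain q where "k = cl p" "q \<in> arrived xs" "cl q = cl p - 1" "\<bar>p - q\<bar> < \<tau>" by blast
      then show ?thesis using pa sub by (intro bexI[of _ q] bexI[of _ p]) auto
    next
      assume "k = cl p + 1 \<and> (\<exists>q\<in>arrived xs. cl q = cl p + 1 \<and> \<bar>p - q\<bar> < \<tau>)"
      then obtain q where "k = cl p + 1" "q \<in> arrived xs" "cl q = cl p + 1" "\<bar>p - q\<bar> < \<tau>" by blast
      then show ?thesis using pa sub by (intro bexI[of _ p] bexI[of _ q]) (auto simp: abs_minus_commute)
    qed
  qed
qed

lemma Mst_join:
  "u \<in> arrived xs \<Longrightarrow> v \<in> arrived xs \<Longrightarrow> cl u + 1 = cl v \<Longrightarrow> \<bar>u - v\<bar> < \<tau> \<Longrightarrow>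
   cl v \<in> Mst cl \<tau> xs \<or> cl v - 1 \<in> Mst cl \<tau> xs \<or> cl v + 1 \<in> Mst cl \<tau> xs"
proof (induction xs arbitrary: u v rule: rev_induct)
  case Nil then show ?case by simp
next
  case (snoc x xs)
  obtain p b where x: "x = (p,b)" by (cases x)
  have mono: "Mst cl \<tau> xs \<subseteq> Mst cl \<tau> (xs @ [x])" by (rule Mst_mono_snoc)
  show ?case
  proof (cases "u \<in> arrived xs \<and> v \<in> arrived xs")
    case True
    from snoc.IH[OF _ _ snoc.prems(3,4)] True mono show ?thesis by blast
  next
    case False
    then have b: b and puv: "p = u \<and> v \<in> arrived xs \<or> p = v \<and> u \<in> arrived xs"
      using snoc.prems(1,2,3) by (auto simp: x arrived_snoc split: if_splits)
    define M where "M = Mst cl \<tau> xs"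
    have eq: "Mst cl \<tau> (xs @ [x]) = step cl \<tau> (arrived xs) p M" by (simp add: x b Mst_snoc M_def)
    define j where "j = cl p"
    define M1 where "M1 = (if (\<exists>q\<in>arrived xs. cl q = j - 1 \<and> \<bar>p - q\<bar> < \<tau>) \<and> j - 1 \<notin> M \<and> j + 1 \<notin> M then insert j M else M)"
    have st: "step cl \<tau> (arrived xs) p M = (if (\<exists>q\<in>arrived xs. cl q = j + 1 \<and> \<bar>p - q\<bar> < \<tau>) \<and> j \<notin> M1 \<and> j + 2 \<notin> M1 then insert (j+1) M1 else M1)"
      by (simp only: step_def Let_def j_def M1_def)
    have MM1: "M \<subseteq> M1" by (auto simp: M1_def)
    have M1S: "M1 \<subseteq> step cl \<tau> (arrived xs) p M" by (subst st) auto
    from puv show ?thesis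
    proof
      assume h: "p = u \<and> v \<in> arrived xs"
      then have br: "\<exists>q\<in>arrived xs. cl q = j + 1 \<and> \<bar>p - q\<bar> < \<tau>"
        using snoc.prems(3,4) by (auto simp: j_def)
      have "j + 1 \<in> step cl \<tau> (arrived xs) p M \<or> j \<in> M1 \<or> j + 2 \<in> M1"
        using br by (subst st) auto
      moreover have "cl v = j + 1" using h snoc.prems(3) by (simp add: j_def)
      ultimately show ?thesis using M1S eq by (auto simp: algebra_simps)
    next
      assume h: "p = v \<and> u \<in> arrived xs"
      then have br: "\<exists>q\<in>arrived xs. cl q = j - 1 \<and> \<bar>p - q\<bar> < \<tau>"
        using snoc.prems(3,4) by (intro bexI[of _ u]) (auto simp: j_def abs_minus_commute)
      have "j \<in> M1 \<or> j - 1 \<in> M \<or> j + 1 \<in> M"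
        using br by (auto simp: M1_def)
      moreover have "cl v = j" using h by (simp add: j_def)
      ultimately show ?thesis using M1S MM1 eq by auto
    qed
  qed
qed

definition grp :: "(real \<Rightarrow> int) \<Rightarrow> int set \<Rightarrow> real \<Rightarrow> int" where
"grp cl M x = (if cl x \<in> M then cl x - 1 else cl x)"

lemma grp_mono: "valid M \<Longrightarrow> valid M' \<Longrightarrow> M \<subseteq> M' \<Longrightarrow> grp cl M u = grp cl M w \<Longrightarrow> grp cl M' u = grp cl M' w"
proof -
  assume v: "valid M" and v': "valid M'" and sub: "M \<subseteq> M'" and e: "grp cl M u = grp cl M w"
  have c: "cl u = cl w \<or> (cl u = cl w + 1 \<and> cl u \<in> M) \<or> (cl w = cl u + 1 \<and> cl w \<in> M)"
    using e unfolding grp_def by (auto split: if_splits)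
  then show ?thesis
  proof (elim disjE)
    assume "cl u = cl w" then show ?thesis by (simp add: grp_def)
  next
    assume h: "cl u = cl w + 1 \<and> cl u \<in> M"
    then have "cl w \<notin> M'" using v' sub unfolding valid_def by auto
    then show ?thesis using h sub by (auto simp: grp_def)
  next
    assume h: "cl w = cl u + 1 \<and> cl w \<in> M"
    then have "cl u \<notin> M'" using v' sub unfolding valid_def by auto
    then show ?thesis using h sub by (auto simp: grp_def)
  qed
qed

lemma grp_cases: "grp cl M u = grp cl M w \<Longrightarrow> cl u = cl w \<or> (cl u = cl w + 1 \<and> cl u \<in> M) \<or> (cl w = cl u + 1 \<and> cl w \<in> M)"
  unfolding grp_def by (auto split: if_splits)

definition Alg :: "(real \<Rightarrow> int) \<Rightarrow> real \<Rightarrow> update list \<Rightarrow> real set set" where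
"Alg cl \<tau> xs = (\<lambda>x. {y \<in> alive xs. grp cl (Mst cl \<tau> xs) y = grp cl (Mst cl \<tau> xs) x}) ` alive xs"

lemma label_partition: "partition_on S ((\<lambda>x. {y \<in> S. g y = g x}) ` S)"
proof (rule partition_onI)
  show "\<Union> ((\<lambda>x. {y \<in> S. g y = g x}) ` S) = S" by blast
next
  fix p q assume "p \<in> (\<lambda>x. {y \<in> S. g y = g x}) ` S" "q \<in> (\<lambda>x. {y \<in> S. g y = g x}) ` S" "p \<noteq> q"
  then obtain a b where "a \<in> S" "b \<in> S" "p = {y \<in> S. g y = g a}" "q = {y \<in> S. g y = g b}" by blast
  with \<open>p \<noteq> q\<close> show "disjnt p q" unfolding disjnt_def by auto
next
  show "{} \<notin> (\<lambda>x. {y \<in> S. g y = g x}) ` S" by blast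
qed

lemma label_cluster: "x \<in> S \<Longrightarrow> cluster ((\<lambda>x. {y \<in> S. g y = g x}) ` S) x = {y \<in> S. g y = g x}"
  unfolding cluster_def by (rule the_equality) auto

lemma Alg_cluster: "x \<in> alive xs \<Longrightarrow> cluster (Alg cl \<tau> xs) x = {y \<in> alive xs. grp cl (Mst cl \<tau> xs) y = grp cl (Mst cl \<tau> xs) x}"
  unfolding Alg_def by (rule label_cluster)

lemma Alg_cluster_eq: "x \<in> alive xs \<Longrightarrow> y \<in> alive xs \<Longrightarrow>
   cluster (Alg cl \<tau> xs) x = cluster (Alg cl \<tau> xs) y \<longleftrightarrow> grp cl (Mst cl \<tau> xs) x = grp cl (Mst cl \<tau> xs) y"
proof -
  assume x: "x \<in> alive xs" and y: "y \<in> alive xs"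
  define g where "g = grp cl (Mst cl \<tau> xs)"
  have "{z \<in> alive xs. g z = g x} = {z \<in> alive xs. g z = g y} \<longleftrightarrow> g x = g y"
  proof
    assume "{z \<in> alive xs. g z = g x} = {z \<in> alive xs. g z = g y}"
    then have "x \<in> {z \<in> alive xs. g z = g y}" using x by blast
    then show "g x = g y" by simp
  qed simp
  then show ?thesis using Alg_cluster[OF x] Alg_cluster[OF y] by (simp add: g_def)
qed

lemma Alg_partition: "partition_on (alive xs) (Alg cl \<tau> xs)"
  unfolding Alg_def by (rule label_partition)

lemma Alg_mono: "u \<in> alive xs \<inter> alive (xs @ [x]) \<Longrightarrow> w \<in> alive xs \<inter> alive (xs @ [x]) \<Longrightarrow>
  cluster (Alg cl \<tau> xs) u = cluster (Alg cl \<tau> xs) w \<Longrightarrow> cluster (Alg cl \<tau> (xs @ [x])) u = cluster (Alg cl \<tau> (xs @ [x])) w"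
  using grp_mono[OF Mst_valid Mst_valid Mst_mono_snoc] Alg_cluster_eq[of u xs w cl \<tau>] Alg_cluster_eq[of u "xs @ [x]" w cl \<tau>]
  by blast

definition clamp :: "real \<Rightarrow> real" where "clamp x = max 0 (min 1 x)"
definition coord :: "int \<Rightarrow> real \<times> real \<Rightarrow> real" where "coord k \<omega> = (if even k then fst \<omega> else snd \<omega>)"
definition cut :: "real \<Rightarrow> int \<Rightarrow> real \<times> real \<Rightarrow> real" where
  "cut s k \<omega> = real_of_int k * (5 * s / 11) + (s / 11) * clamp (coord k \<omega>)"
definition cell :: "real \<Rightarrow> real \<times> real \<Rightarrow> real \<Rightarrow> int" where
  "cell s \<omega> x = (if cut s \<lfloor>x / (5 * s / 11)\<rfloor> \<omega> \<le> x then \<lfloor>x / (5 * s / 11)\<rfloor> else \<lfloor>x / (5 * s / 11)\<rfloor> - 1)"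

lemma clamp_bounds: "0 \<le> clamp x" "clamp x \<le> 1" by (auto simp: clamp_def)

lemma cut_bounds: assumes "s > 0"
  shows "real_of_int k * (5 * s / 11) \<le> cut s k \<omega>" "cut s k \<omega> \<le> real_of_int k * (5 * s / 11) + s / 11"
  using clamp_bounds[of "coord k \<omega>"] assms by (auto simp: cut_def)

lemma cut_diff: assumes "s > 0" "k < m"
  shows "cut s m \<omega> - cut s k \<omega> \<ge> 4 * s / 11"
proof -
  have "real_of_int k + 1 \<le> real_of_int m" using assms(2) by linarith
  then have "(real_of_int k + 1) * (5 * s / 11) \<le> real_of_int m * (5 * s / 11)"
    using assms(1) by (intro mult_right_mono) auto
  then show ?thesis using cut_bounds[OF assms(1), of k \<omega>] cut_bounds[OF assms(1), of m \<omega>]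
    by (auto simp: algebra_simps)
qed

lemma cut_diff1: assumes "s > 0" shows "cut s (k+1) \<omega> - cut s k \<omega> \<le> 6 * s / 11"
proof -
  have e: "real_of_int (k+1) * (5 * s / 11) = real_of_int k * (5 * s / 11) + 5 * s / 11" by (simp add: algebra_simps)
  show ?thesis using cut_bounds[OF assms, of k \<omega>] cut_bounds[OF assms, of "k+1" \<omega>] unfolding e by linarith
qed

lemma cut_diff2: assumes "s > 0" shows "cut s (k+2) \<omega> - cut s k \<omega> \<le> s"
proof -
  have e: "real_of_int (k+2) * (5 * s / 11) = real_of_int k * (5 * s / 11) + 10 * s / 11" by (simp add: algebra_simps)
  show ?thesis using cut_bounds[OF assms, of k \<omega>] cut_bounds[OF assms, of "k+2" \<omega>] unfolding e by linarith
qed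

lemma cell_bracket: assumes "s > 0"
  shows "cut s (cell s \<omega> x) \<omega> \<le> x" "x < cut s (cell s \<omega> x + 1) \<omega>"
proof -
  define L where "L = 5 * s / 11"
  have L: "L > 0" using assms by (simp add: L_def)
  define f where "f = \<lfloor>x / L\<rfloor>"
  have f1: "real_of_int f * L \<le> x" using L by (simp add: f_def) (metis floor_divide_lower)
  have f2: "x < (real_of_int f + 1) * L" using L by (simp add: f_def) (metis floor_divide_upper)
  have c: "cell s \<omega> x = (if cut s f \<omega> \<le> x then f else f - 1)" by (simp add: cell_def f_def L_def)
  have cb: "\<And>k. real_of_int k * L \<le> cut s k \<omega> \<and> cut s k \<omega> \<le> real_of_int k * L + s / 11"
    using cut_bounds[OF assms] by (simp add: L_def)
  show "cut s (cell s \<omega> x) \<omega> \<le> x"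
  proof (cases "cut s f \<omega> \<le> x")
    case True then show ?thesis by (simp add: c)
  next
    case False
    have "cut s (f - 1) \<omega> \<le> real_of_int (f - 1) * L + s / 11" using cb by blast
    also have "\<dots> = real_of_int f * L - 4 * s / 11" by (simp add: L_def field_simps)
    also have "\<dots> \<le> real_of_int f * L" using assms by simp
    finally show ?thesis using False f1 by (simp add: c)
  qed
  show "x < cut s (cell s \<omega> x + 1) \<omega>"
  proof (cases "cut s f \<omega> \<le> x")
    case True
    have "x < real_of_int (f + 1) * L" using f2 by simp
    also have "\<dots> \<le> cut s (f + 1) \<omega>" using cb by blast
    finally show ?thesis using True by (simp add: c)
  next
    case False then show ?thesis by (simp add: c)
  qed
qed

lemma cell_range: assumes "s > 0"
  shows "cell s \<omega> x \<le> \<lfloor>x / (5 * s / 11)\<rfloor>" "\<lfloor>x / (5 * s / 11)\<rfloor> - 1 \<le> cell s \<omega> x"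
  by (auto simp: cell_def)

lemma cut_mono: assumes "s > 0" "k \<le> m" shows "cut s k \<omega> \<le> cut s m \<omega>"
  using cut_diff[OF assms(1), where k=k and m=m and \<omega>=\<omega>] assms by (cases "k = m") auto

lemma cell_mono: assumes "s > 0" "x \<le> y" shows "cell s \<omega> x \<le> cell s \<omega> y"
proof (rule ccontr)
  assume "\<not> ?thesis"
  then have "cell s \<omega> y + 1 \<le> cell s \<omega> x" by simp
  then have "cut s (cell s \<omega> y + 1) \<omega> \<le> cut s (cell s \<omega> x) \<omega>" by (rule cut_mono[OF assms(1)])
  then show False using cell_bracket[OF assms(1), where \<omega>=\<omega> and x=x] cell_bracket[OF assms(1), where \<omega>=\<omega> and x=y] assms(2) by linarith
qed

lemma cell_between: assumes "s > 0" "cell s \<omega> x < k" "k \<le> cell s \<omega> y"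
  shows "x < cut s k \<omega>" "cut s k \<omega> \<le> y"
proof -
  have "cut s (cell s \<omega> x + 1) \<omega> \<le> cut s k \<omega>" using assms by (intro cut_mono) auto
  then show "x < cut s k \<omega>" using cell_bracket[OF assms(1), where \<omega>=\<omega> and x=x] by linarith
  have "cut s k \<omega> \<le> cut s (cell s \<omega> y) \<omega>" using assms by (intro cut_mono) auto
  then show "cut s k \<omega> \<le> y" using cell_bracket[OF assms(1), where \<omega>=\<omega> and x=y] by linarith
qed

lemma same_cell_dist: assumes "s > 0" "cell s \<omega> x = k" "cell s \<omega> y = k"
  shows "\<bar>x - y\<bar> < 6 * s / 11"
  using cell_bracket[OF assms(1), where \<omega>=\<omega> and x=x] cell_bracket[OF assms(1), where \<omega>=\<omega> and x=y] cut_diff1[OF assms(1), where k=k and \<omega>=\<omega>] assms(2,3)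
  unfolding abs_less_iff by auto

lemma adj_cell_dist: assumes "s > 0" "cell s \<omega> x = k" "cell s \<omega> y = k + 1"
  shows "\<bar>x - y\<bar> < s"
  using cell_bracket[OF assms(1), where \<omega>=\<omega> and x=x] cell_bracket[OF assms(1), where \<omega>=\<omega> and x=y] cut_diff2[OF assms(1), where k=k and \<omega>=\<omega>] assms(2,3)
  unfolding abs_less_iff by (auto simp: add.assoc)

lemma cell_close: assumes "s > 0" "x < y" "y - x < 4 * s / 11" "cell s \<omega> x \<noteq> cell s \<omega> y"
  shows "cell s \<omega> y = cell s \<omega> x + 1"
proof (rule ccontr)
  assume "\<not> ?thesis"
  moreover have "cell s \<omega> x \<le> cell s \<omega> y" using assms by (intro cell_mono) auto
  ultimately have lt: "cell s \<omega> x + 1 < cell s \<omega> y" using assms(4) by linarith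
  have "cut s (cell s \<omega> y) \<omega> - cut s (cell s \<omega> x + 1) \<omega> \<ge> 4 * s / 11" by (rule cut_diff[OF assms(1) lt])
  then show False using cell_bracket[OF assms(1), where \<omega>=\<omega> and x=x] cell_bracket[OF assms(1), where \<omega>=\<omega> and x=y] assms(3) by linarith
qed

definition alg :: "real \<Rightarrow> real \<Rightarrow> real \<times> real \<Rightarrow> update list \<Rightarrow> real set set" where
  "alg s \<epsilon> \<omega> = Alg (cell s \<omega>) (2 * \<epsilon> * s)"

lemma grp_dist: assumes "s > 0" "valid M" "grp (cell s \<omega>) M y = grp (cell s \<omega>) M z"
  shows "\<bar>y - z\<bar> < s"
proof -
  from grp_cases[OF assms(3)] show ?thesis
  proof (elim disjE)
    assume "cell s \<omega> y = cell s \<omega> z"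
    then show ?thesis using same_cell_dist[OF assms(1), of \<omega> y "cell s \<omega> z" z] assms(1) by simp
  next
    assume "cell s \<omega> y = cell s \<omega> z + 1 \<and> cell s \<omega> y \<in> M"
    then show ?thesis using adj_cell_dist[OF assms(1), of \<omega> z "cell s \<omega> z" y] by (simp add: abs_minus_commute)
  next
    assume "cell s \<omega> z = cell s \<omega> y + 1 \<and> cell s \<omega> z \<in> M"
    then show ?thesis using adj_cell_dist[OF assms(1), of \<omega> y "cell s \<omega> y" z] by simp
  qed
qed

lemma alg_online: assumes "s > 0" shows "online_mono_partition n s (alg s \<epsilon> \<omega>)"
  unfolding online_mono_partition_def
proof (intro conjI allI impI ballI)
  fix xs :: "update list"
  show "partition_on (alive xs) (alg s \<epsilon> \<omega> xs)" by (simp add: alg_def Alg_partition)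
  show "s_bounded s (alg s \<epsilon> \<omega> xs)" unfolding s_bounded_def
  proof
    fix C assume "C \<in> alg s \<epsilon> \<omega> xs"
    then obtain x where C: "C = {y \<in> alive xs. grp (cell s \<omega>) (Mst (cell s \<omega>) (2 * \<epsilon> * s) xs) y = grp (cell s \<omega>) (Mst (cell s \<omega>) (2 * \<epsilon> * s) xs) x}"
      by (auto simp: alg_def Alg_def)
    show "diameter C \<le> s"
    proof (rule diameter_le)
      show "C \<noteq> {} \<or> 0 \<le> s" using assms by simp
      fix y z assume "y \<in> C" "z \<in> C"
      then have "grp (cell s \<omega>) (Mst (cell s \<omega>) (2 * \<epsilon> * s) xs) y = grp (cell s \<omega>) (Mst (cell s \<omega>) (2 * \<epsilon> * s) xs) z"
        by (simp add: C)
      from grp_dist[OF assms Mst_valid this] show "norm (y - z) \<le> s" by simp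
    qed
  qed
next
  fix xs x u w
  assume "u \<in> alive xs \<inter> alive (xs @ [x])" "w \<in> alive xs \<inter> alive (xs @ [x])"
    "cluster (alg s \<epsilon> \<omega> xs) u = cluster (alg s \<epsilon> \<omega> xs) w"
  then show "cluster (alg s \<epsilon> \<omega> (xs @ [x])) u = cluster (alg s \<epsilon> \<omega> (xs @ [x])) w"
    unfolding alg_def by (rule Alg_mono)
qed

lemma alg_cluster_eq: "x \<in> alive xs \<Longrightarrow> y \<in> alive xs \<Longrightarrow>
   cluster (alg s \<epsilon> \<omega> xs) x = cluster (alg s \<epsilon> \<omega> xs) y \<longleftrightarrow>
   grp (cell s \<omega>) (Mst (cell s \<omega>) (2 * \<epsilon> * s) xs) x = grp (cell s \<omega>) (Mst (cell s \<omega>) (2 * \<epsilon> * s) xs) y"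
  unfolding alg_def by (rule Alg_cluster_eq)

lemma sep_cover1:
  assumes s: "s > 0" and uv: "u < v" and al: "u \<in> alive xs" "v \<in> alive xs"
    and sep: "cluster (alg s \<epsilon> \<omega> xs) u \<noteq> cluster (alg s \<epsilon> \<omega> xs) v"
  shows "\<exists>j\<in>{\<lfloor>u / (5 * s / 11)\<rfloor>..\<lfloor>v / (5 * s / 11)\<rfloor>}. u < cut s j \<omega> \<and> cut s j \<omega> \<le> v"
proof -
  have "cell s \<omega> u \<noteq> cell s \<omega> v" using sep al by (auto simp: alg_cluster_eq grp_def split: if_splits)
  moreover have "cell s \<omega> u \<le> cell s \<omega> v" using uv by (intro cell_mono[OF s]) auto
  ultimately have lt: "cell s \<omega> u < cell s \<omega> v" by simp
  have b: "u < cut s (cell s \<omega> v) \<omega>" "cut s (cell s \<omega> v) \<omega> \<le> v"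
    using cell_between[OF s lt order_refl] by auto
  have "cell s \<omega> v \<le> \<lfloor>v / (5 * s / 11)\<rfloor>" by (rule cell_range[OF s])
  moreover have "\<lfloor>u / (5 * s / 11)\<rfloor> \<le> cell s \<omega> v" using cell_range(2)[OF s, of u \<omega>] lt by linarith
  ultimately show ?thesis using b by auto
qed

lemma bridge_bad:
  assumes s: "s > 0" and k: "k \<in> Mst (cell s \<omega>) (2 * \<epsilon> * s) xs"
  shows "\<exists>z\<in>arrived xs. \<bar>z - cut s k \<omega>\<bar> < 2 * \<epsilon> * s"
proof -
  obtain x y where xy: "x \<in> arrived xs" "y \<in> arrived xs" "cell s \<omega> x = k - 1" "cell s \<omega> y = k" "\<bar>y - x\<bar> < 2 * \<epsilon> * s"
    using Mst_bridge[OF k] by blast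
  have "x < cut s k \<omega>" "cut s k \<omega> \<le> y" using cell_between[OF s, of \<omega> x k y] xy by auto
  then show ?thesis using xy by (intro bexI[of _ x]) auto
qed

lemma sep_cover2:
  assumes s: "s > 0" and uv: "u < v" and al: "u \<in> alive xs" "v \<in> alive xs"
    and close: "v - u < 2 * \<epsilon> * s" and eps: "v - u < 4 * s / 11"
    and sep: "cluster (alg s \<epsilon> \<omega> xs) u \<noteq> cluster (alg s \<epsilon> \<omega> xs) v"
  shows "\<exists>j\<in>{\<lfloor>u / (5 * s / 11)\<rfloor>..\<lfloor>v / (5 * s / 11)\<rfloor>}. (u < cut s j \<omega> \<and> cut s j \<omega> \<le> v) \<and>
           (\<exists>z\<in>arrived xs. \<bar>z - cut s (j - 1) \<omega>\<bar> < 2 * \<epsilon> * s \<or> \<bar>z - cut s (j + 1) \<omega>\<bar> < 2 * \<epsilon> * s)"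
proof -
  define cl where "cl = cell s \<omega>"
  define M where "M = Mst cl (2 * \<epsilon> * s) xs"
  have gne: "grp cl M u \<noteq> grp cl M v" using sep al by (simp add: alg_cluster_eq cl_def M_def)
  then have ne: "cl u \<noteq> cl v" by (auto simp: grp_def split: if_splits)
  have adj: "cl v = cl u + 1" using cell_close[OF s uv _ ne[unfolded cl_def]] close eps by (simp add: cl_def)
  have ar: "u \<in> arrived xs" "v \<in> arrived xs" using al alive_sub_arrived by auto
  have abs: "\<bar>u - v\<bar> < 2 * \<epsilon> * s" using close uv by simp
  have "cl v \<in> M \<or> cl v - 1 \<in> M \<or> cl v + 1 \<in> M"
    using Mst_join[OF ar adj[symmetric] abs] by (simp add: M_def)
  moreover have "cl v \<notin> M"
  proof
    assume "cl v \<in> M"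
    moreover have "cl u \<notin> M" using Mst_valid[of cl "2 * \<epsilon> * s" xs] \<open>cl v \<in> M\<close> adj by (auto simp: valid_def M_def)
    ultimately show False using gne adj by (simp add: grp_def)
  qed
  ultimately have "cl v - 1 \<in> M \<or> cl v + 1 \<in> M" by simp
  then have bad: "\<exists>z\<in>arrived xs. \<bar>z - cut s (cl v - 1) \<omega>\<bar> < 2 * \<epsilon> * s \<or> \<bar>z - cut s (cl v + 1) \<omega>\<bar> < 2 * \<epsilon> * s"
    using bridge_bad[OF s, where k="cl v - 1" and \<omega>=\<omega> and \<epsilon>=\<epsilon> and xs=xs] bridge_bad[OF s, where k="cl v + 1" and \<omega>=\<omega> and \<epsilon>=\<epsilon> and xs=xs] by (auto simp: M_def cl_def)
  obtain j where j: "j\<in>{\<lfloor>u / (5 * s / 11)\<rfloor>..\<lfloor>v / (5 * s / 11)\<rfloor>}" "u < cut s j \<omega>" "cut s j \<omega> \<le> v"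
    using sep_cover1[OF s uv al sep] by blast
  have "cl u < cl v" using adj by simp
  have "j = cl v"
  proof (rule ccontr)
    assume jn: "j \<noteq> cl v"
    have "cut s (cl v) \<omega> \<le> v" using cell_bracket[OF s, where \<omega>=\<omega> and x=v] by (simp add: cl_def)
    have "u < cut s (cl v) \<omega>" using cell_bracket[OF s, where \<omega>=\<omega> and x=u] adj by (simp add: cl_def)
    show False
    proof (cases "j < cl v")
      case True
      then have "cut s (cl v) \<omega> - cut s j \<omega> \<ge> 4 * s / 11" by (rule cut_diff[OF s])
      moreover have "j \<le> cl u" using True adj by simp
      then have "cut s j \<omega> \<le> cut s (cl u) \<omega>" by (rule cut_mono[OF s])
      ultimately show False using cell_bracket[OF s, where \<omega>=\<omega> and x=u] j close eps
        \<open>cut s (cl v) \<omega> \<le> v\<close> by (simp add: cl_def)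
    next
      case False
      then have "cl v < j" using jn by simp
      then have "cut s j \<omega> - cut s (cl v) \<omega> \<ge> 4 * s / 11" by (rule cut_diff[OF s])
      then show False using \<open>u < cut s (cl v) \<omega>\<close> j close eps by linarith
    qed
  qed
  then show ?thesis using j bad by auto
qed

lemma zero_lt:
  assumes s: "s > 0" and e0: "\<epsilon> > 0" and e3: "\<epsilon> \<le> 1/3"
    and H: "\<forall>a\<in>arrived xs. \<forall>b\<in>arrived xs. \<not> (\<epsilon> * s \<le> \<bar>a - b\<bar> \<and> \<bar>a - b\<bar> \<le> s)"
    and uv: "u < v" and al: "u \<in> alive xs" "v \<in> alive xs" and d: "v - u \<le> s"
  shows "cluster (alg s \<epsilon> \<omega> xs) u = cluster (alg s \<epsilon> \<omega> xs) v"
proof (rule ccontr)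
  assume sep: "\<not> ?thesis"
  have es: "\<epsilon> * s \<le> s / 3" using e3 s by (simp add: field_simps)
  define cl where "cl = cell s \<omega>"
  define M where "M = Mst cl (2 * \<epsilon> * s) xs"
  have ar: "u \<in> arrived xs" "v \<in> arrived xs" using al alive_sub_arrived by auto
  have clos: "\<And>a b. a \<in> arrived xs \<Longrightarrow> b \<in> arrived xs \<Longrightarrow> \<bar>a - b\<bar> \<le> s \<Longrightarrow> \<bar>a - b\<bar> < \<epsilon> * s"
  proof -
    fix a b assume ab: "a \<in> arrived xs" "b \<in> arrived xs" "\<bar>a - b\<bar> \<le> s"
    have "\<not> (\<epsilon> * s \<le> \<bar>a - b\<bar> \<and> \<bar>a - b\<bar> \<le> s)" using H ab(1,2) by blast
    then show "\<bar>a - b\<bar> < \<epsilon> * s" using ab(3) by linarith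
  qed
  have "\<bar>v - u\<bar> < \<epsilon> * s" using clos[OF ar(2) ar(1)] uv d by simp
  then have close: "v - u < \<epsilon> * s" using uv by simp
  have trans: "\<And>a b c. a \<in> arrived xs \<Longrightarrow> b \<in> arrived xs \<Longrightarrow> c \<in> arrived xs \<Longrightarrow>
      \<bar>a - b\<bar> < \<epsilon> * s \<Longrightarrow> \<bar>b - c\<bar> < \<epsilon> * s \<Longrightarrow> \<bar>a - c\<bar> < \<epsilon> * s"
  proof -
    fix a b c assume abc: "a \<in> arrived xs" "b \<in> arrived xs" "c \<in> arrived xs" "\<bar>a - b\<bar> < \<epsilon> * s" "\<bar>b - c\<bar> < \<epsilon> * s"
    then have "\<bar>a - c\<bar> \<le> s" using es by linarith
    then show "\<bar>a - c\<bar> < \<epsilon> * s" using clos abc by blast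
  qed
  have gne: "grp cl M u \<noteq> grp cl M v" using sep al by (simp add: alg_cluster_eq cl_def M_def)
  then have ne: "cl u \<noteq> cl v" by (auto simp: grp_def split: if_splits)
  have adj: "cl v = cl u + 1" using cell_close[OF s uv _ ne[unfolded cl_def]] close es s by (simp add: cl_def)
  have abs: "\<bar>u - v\<bar> < \<epsilon> * s" using close uv by simp
  have abs2: "\<bar>u - v\<bar> < 2 * \<epsilon> * s" using abs e0 s by (simp add: mult_pos_pos)
  have "cl v \<in> M \<or> cl v - 1 \<in> M \<or> cl v + 1 \<in> M"
    using Mst_join[OF ar adj[symmetric] abs2] by (simp add: M_def)
  moreover have "cl v \<notin> M"
  proof
    assume "cl v \<in> M"
    moreover have "cl u \<notin> M" using Mst_valid[of cl "2 * \<epsilon> * s" xs] \<open>cl v \<in> M\<close> adj by (auto simp: valid_def M_def)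
    ultimately show False using gne adj by (simp add: grp_def)
  qed
  ultimately have "cl v - 1 \<in> M \<or> cl v + 1 \<in> M" by simp
  then show False
  proof
    assume "cl v - 1 \<in> M"
    then obtain x y where xy: "x \<in> arrived xs" "y \<in> arrived xs" "cl x = cl v - 1 - 1" "cl y = cl v - 1" "\<bar>y - x\<bar> < 2 * \<epsilon> * s"
      using Mst_bridge[of "cl v - 1" cl "2 * \<epsilon> * s" xs] by (auto simp: M_def)
    have "\<bar>y - x\<bar> \<le> s" using xy(5) es by linarith
    then have yx: "\<bar>y - x\<bar> < \<epsilon> * s" by (rule clos[OF xy(2) xy(1)])
    have "cell s \<omega> y = cell s \<omega> u" using xy(4) adj by (simp only: cl_def)
    then have "\<bar>y - u\<bar> < 6 * s / 11" by (rule same_cell_dist[OF s _ refl])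
    then have "\<bar>y - u\<bar> \<le> s" using s by linarith
    then have yu: "\<bar>y - u\<bar> < \<epsilon> * s" by (rule clos[OF xy(2) ar(1)])
    have xy': "\<bar>x - y\<bar> < \<epsilon> * s" using yx by (simp add: abs_minus_commute)
    have xu: "\<bar>x - u\<bar> < \<epsilon> * s" by (rule trans[OF xy(1) xy(2) ar(1) xy' yu])
    have xv: "\<bar>x - v\<bar> < \<epsilon> * s" by (rule trans[OF xy(1) ar(1) ar(2) xu abs])
    have c1: "x < cut s (cl v - 1) \<omega>" using cell_between(1)[OF s, of \<omega> x "cl v - 1" y] xy(3,4) by (simp add: cl_def)
    have c2: "cut s (cl v) \<omega> \<le> v" using cell_bracket(1)[OF s, where \<omega>=\<omega> and x=v] by (simp add: cl_def)
    have c3: "cut s (cl v) \<omega> - cut s (cl v - 1) \<omega> \<ge> 4 * s / 11" by (rule cut_diff[OF s]) simp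
    have "v - x < \<epsilon> * s" using xv by (simp add: abs_less_iff)
    then show False using c1 c2 c3 es s by linarith
  next
    assume "cl v + 1 \<in> M"
    then obtain x y where xy: "x \<in> arrived xs" "y \<in> arrived xs" "cl x = cl v" "cl y = cl v + 1" "\<bar>y - x\<bar> < 2 * \<epsilon> * s"
      using Mst_bridge[of "cl v + 1" cl "2 * \<epsilon> * s" xs] by (auto simp: M_def)
    have "\<bar>y - x\<bar> \<le> s" using xy(5) es by linarith
    then have yx: "\<bar>y - x\<bar> < \<epsilon> * s" by (rule clos[OF xy(2) xy(1)])
    have "cell s \<omega> x = cell s \<omega> v" using xy(3) by (simp only: cl_def)
    then have "\<bar>x - v\<bar> < 6 * s / 11" by (rule same_cell_dist[OF s _ refl])
    then have "\<bar>x - v\<bar> \<le> s" using s by linarith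
    then have xv: "\<bar>x - v\<bar> < \<epsilon> * s" by (rule clos[OF xy(1) ar(2)])
    have vu: "\<bar>v - u\<bar> < \<epsilon> * s" using abs by (simp add: abs_minus_commute)
    have yv: "\<bar>y - v\<bar> < \<epsilon> * s" by (rule trans[OF xy(2) xy(1) ar(2) yx xv])
    have yu: "\<bar>y - u\<bar> < \<epsilon> * s" by (rule trans[OF xy(2) ar(2) ar(1) yv vu])
    have c1: "cut s (cl v + 1) \<omega> \<le> y" using cell_between(2)[OF s, of \<omega> x "cl v + 1" y] xy(3,4) by (simp add: cl_def)
    have c2: "u < cut s (cl v) \<omega>" using cell_bracket(2)[OF s, where \<omega>=\<omega> and x=u] adj by (simp add: cl_def)
    have c3: "cut s (cl v + 1) \<omega> - cut s (cl v) \<omega> \<ge> 4 * s / 11" by (rule cut_diff[OF s]) simp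
    have "y - u < \<epsilon> * s" using yu by (simp add: abs_less_iff)
    then show False using c1 c2 c3 es s by linarith
  qed
qed

lemma zero_all:
  assumes s: "s > 0" and e0: "\<epsilon> > 0" and e3: "\<epsilon> \<le> 1/3"
    and H: "\<forall>a\<in>arrived xs. \<forall>b\<in>arrived xs. \<not> (\<epsilon> * s \<le> \<bar>a - b\<bar> \<and> \<bar>a - b\<bar> \<le> s)"
    and al: "u \<in> alive xs" "v \<in> alive xs" and d: "\<bar>u - v\<bar> \<le> s"
  shows "cluster (alg s \<epsilon> \<omega> xs) u = cluster (alg s \<epsilon> \<omega> xs) v"
proof -
  consider "u < v" | "u = v" | "v < u" by linarith
  then show ?thesis
  proof cases
    case 1 then show ?thesis using zero_lt[OF s e0 e3 H 1 al] d by simp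
  next
    case 2 then show ?thesis by simp
  next
    case 3 then show ?thesis using zero_lt[OF s e0 e3 H 3 al(2,1)] d by simp
  qed
qed

definition M0 :: "real measure" where "M0 = uniform_measure lborel {0..1}"
definition Om :: "(real \<times> real) measure" where "Om = M0 \<Otimes>\<^sub>M M0"

lemma M0_prob: "prob_space M0"
  unfolding M0_def by (rule prob_space_uniform_measure) auto

lemma sets_M0[measurable_cong, simp]: "sets M0 = sets borel"
  by (simp add: M0_def)

lemma space_M0[simp]: "space M0 = UNIV"
  by (simp add: M0_def)

interpretation M0: prob_space M0 by (rule M0_prob)

interpretation Om2: pair_prob_space M0 M0 ..

lemma Om_prob: "prob_space Om" unfolding Om_def by (rule Om2.prob_space_axioms)

lemma space_Om[simp]: "space Om = UNIV"
  by (simp add: Om_def space_pair_measure)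

lemma sets_Om[measurable_cong]: "sets Om = sets (borel \<Otimes>\<^sub>M borel)"
  unfolding Om_def by (intro sets_pair_measure_cong) auto

lemma clamp_meas[measurable]: "clamp \<in> borel_measurable borel"
  unfolding clamp_def by measurable

lemma cut_meas[measurable]: "(\<lambda>\<omega>. cut s k \<omega>) \<in> borel_measurable Om"
  unfolding cut_def coord_def by (cases "even k") simp_all

lemma cell_set_meas: "{\<omega> \<in> space Om. cell s \<omega> x = k} \<in> sets Om"
proof -
  define f where "f = \<lfloor>x / (5 * s / 11)\<rfloor>"
  have "{\<omega> \<in> space Om. cell s \<omega> x = k} =
     (if k = f then {\<omega> \<in> space Om. cut s f \<omega> \<le> x} else {}) \<union>
     (if k = f - 1 then {\<omega> \<in> space Om. \<not> cut s f \<omega> \<le> x} else {})"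
    unfolding cell_def f_def[symmetric] by auto
  also have "\<dots> \<in> sets Om"
  proof (intro sets.Un)
    have a: "{\<omega> \<in> space Om. cut s f \<omega> \<le> x} \<in> sets Om" by measurable
    have b: "{\<omega> \<in> space Om. \<not> cut s f \<omega> \<le> x} \<in> sets Om" by measurable
    show "(if k = f then {\<omega> \<in> space Om. cut s f \<omega> \<le> x} else {}) \<in> sets Om" using a by simp
    show "(if k = f - 1 then {\<omega> \<in> space Om. \<not> cut s f \<omega> \<le> x} else {}) \<in> sets Om" using b by simp
  qed
  finally show ?thesis .
qed

lemma map_cell_set_meas: "{\<omega> \<in> space Om. map (cell s \<omega>) P = ys} \<in> sets Om"
proof (induction P arbitrary: ys)
  case Nil
  show ?case using sets.top[of Om] by (cases ys) auto
next
  case (Cons p P)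
  show ?case
  proof (cases ys)
    case Nil then show ?thesis by simp
  next
    case (Cons y ys')
    have "{\<omega> \<in> space Om. map (cell s \<omega>) (p # P) = ys} =
       {\<omega> \<in> space Om. cell s \<omega> p = y} \<inter> {\<omega> \<in> space Om. map (cell s \<omega>) P = ys'}"
      by (auto simp: Cons)
    also have "\<dots> \<in> sets Om" using cell_set_meas Cons.IH by blast
    finally show ?thesis .
  qed
qed

lemma map_cell_meas: "(\<lambda>\<omega>. map (cell s \<omega>) P) \<in> measurable Om (count_space UNIV)"
proof (subst measurable_count_space_eq2_countable)
  show "(\<lambda>\<omega>. map (cell s \<omega>) P) \<in> space Om \<rightarrow> UNIV \<and>
    (\<forall>a\<in>UNIV. (\<lambda>\<omega>. map (cell s \<omega>) P) -` {a} \<inter> space Om \<in> sets Om)"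
  proof (intro conjI ballI)
    fix a :: "int list"
    have "(\<lambda>\<omega>. map (cell s \<omega>) P) -` {a} \<inter> space Om = {\<omega> \<in> space Om. map (cell s \<omega>) P = a}" by auto
    then show "(\<lambda>\<omega>. map (cell s \<omega>) P) -` {a} \<inter> space Om \<in> sets Om" using map_cell_set_meas by simp
  qed auto
qed

definition pts :: "update list \<Rightarrow> real set" where "pts xs = fst ` set xs"

lemma arrived_pts: "arrived xs \<subseteq> pts xs" by (force simp: arrived_def pts_def)
lemma alive_pts: "alive xs \<subseteq> pts xs" using alive_sub_arrived arrived_pts by blast

lemma step_cong: "(\<And>x. x \<in> insert p S \<Longrightarrow> cl x = cl' x) \<Longrightarrow> step cl \<tau> S p M = step cl' \<tau> S p M"
proof -
  assume h: "\<And>x. x \<in> insert p S \<Longrightarrow> cl x = cl' x"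
  have hp: "cl p = cl' p" using h by blast
  have e1: "(\<exists>q\<in>S. cl q = cl' p - 1 \<and> \<bar>p - q\<bar> < \<tau>) = (\<exists>q\<in>S. cl' q = cl' p - 1 \<and> \<bar>p - q\<bar> < \<tau>)"
    using h by auto
  have e2: "(\<exists>q\<in>S. cl q = cl' p + 1 \<and> \<bar>p - q\<bar> < \<tau>) = (\<exists>q\<in>S. cl' q = cl' p + 1 \<and> \<bar>p - q\<bar> < \<tau>)"
    using h by auto
  show ?thesis by (simp only: step_def Let_def hp e1 e2)
qed

lemma Mst_cong: "(\<And>x. x \<in> pts xs \<Longrightarrow> cl x = cl' x) \<Longrightarrow> Mst cl \<tau> xs = Mst cl' \<tau> xs"
proof (induction xs rule: rev_induct)
  case Nil then show ?case by simp
next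
  case (snoc x xs)
  obtain p b where x: "x = (p, b)" by (cases x)
  have h: "\<And>y. y \<in> pts xs \<Longrightarrow> cl y = cl' y" using snoc.prems by (auto simp: pts_def)
  have hp: "cl p = cl' p" using snoc.prems by (auto simp: pts_def x)
  have "\<And>y. y \<in> insert p (arrived xs) \<Longrightarrow> cl y = cl' y" using h hp arrived_pts by auto
  then have "step cl \<tau> (arrived xs) p (Mst cl' \<tau> xs) = step cl' \<tau> (arrived xs) p (Mst cl' \<tau> xs)"
    by (rule step_cong)
  then show ?case using snoc.IH[OF h] by (simp add: x Mst_snoc)
qed

lemma Alg_cong: "(\<And>x. x \<in> pts xs \<Longrightarrow> cl x = cl' x) \<Longrightarrow> Alg cl \<tau> xs = Alg cl' \<tau> xs"
proof -
  assume h: "\<And>x. x \<in> pts xs \<Longrightarrow> cl x = cl' x"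
  have M: "Mst cl \<tau> xs = Mst cl' \<tau> xs" by (rule Mst_cong[OF h])
  have g: "\<And>y. y \<in> alive xs \<Longrightarrow> grp cl (Mst cl \<tau> xs) y = grp cl' (Mst cl' \<tau> xs) y"
  proof -
    fix y assume "y \<in> alive xs"
    then have "cl y = cl' y" using h alive_pts by blast
    then show "grp cl (Mst cl \<tau> xs) y = grp cl' (Mst cl' \<tau> xs) y" by (simp add: grp_def M)
  qed
  show ?thesis unfolding Alg_def
    by (rule image_cong[OF refl]) (use g in auto)
qed

definition clof :: "real list \<Rightarrow> int list \<Rightarrow> real \<Rightarrow> int" where
  "clof P ys x = (case map_of (zip P ys) x of Some k \<Rightarrow> k | None \<Rightarrow> 0)"

lemma clof_map: "x \<in> set P \<Longrightarrow> clof P (map f P) x = f x"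
  by (simp add: clof_def map_of_zip_map)

lemma alg_meas: "{\<omega> \<in> space Om. Q (alg s \<epsilon> \<omega> xs)} \<in> sets Om"
proof -
  define P where "P = map fst xs"
  have sP: "set P = pts xs" by (simp add: P_def pts_def)
  have eq: "alg s \<epsilon> \<omega> xs = Alg (clof P (map (cell s \<omega>) P)) (2 * \<epsilon> * s) xs" for \<omega>
    unfolding alg_def by (rule Alg_cong) (simp add: clof_map sP)
  have "{\<omega> \<in> space Om. Q (alg s \<epsilon> \<omega> xs)} =
        (\<lambda>\<omega>. map (cell s \<omega>) P) -` {ys. Q (Alg (clof P ys) (2 * \<epsilon> * s) xs)} \<inter> space Om"
    by (auto simp: eq)
  also have "\<dots> \<in> sets Om"
    by (rule measurable_sets[OF map_cell_meas]) simp
  finally show ?thesis .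
qed

lemma M0_bound:
  assumes h: "h > 0" and ab: "a \<le> b" and P: "{x. P x} \<in> sets borel"
    and bnd: "\<And>x. P x \<Longrightarrow> a \<le> K + h * clamp x \<and> K + h * clamp x \<le> b"
  shows "measure M0 {x. P x} \<le> (b - a) / h"
proof -
  have "measure M0 {x. P x} = measure lborel ({0..1} \<inter> {x. P x}) / measure lborel {0..1::real}"
    unfolding M0_def by (rule measure_uniform_measure) (use P in auto)
  also have "\<dots> = measure lborel ({0..1} \<inter> {x. P x})" by simp
  also have "\<dots> \<le> measure lborel {(a - K) / h .. (b - K) / h}"
  proof (rule measure_mono_fmeasurable)
    show "{0..1} \<inter> {x. P x} \<subseteq> {(a - K) / h..(b - K) / h}"
    proof
      fix x assume x: "x \<in> {0..1} \<inter> {x. P x}"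
      then have c: "clamp x = x" by (auto simp: clamp_def)
      from bnd[of x] x c have "a \<le> K + h * x" "K + h * x \<le> b" by auto
      then show "x \<in> {(a - K) / h..(b - K) / h}" using h by (auto simp: field_simps)
    qed
    show "{0..1} \<inter> {x. P x} \<in> sets lborel" using P by auto
    show "{(a - K) / h..(b - K) / h} \<in> fmeasurable lborel" by (rule fmeasurable_compact) simp
  qed
  also have "\<dots> = (b - a) / h" using h ab by (simp add: field_simps divide_right_mono)
  finally show ?thesis .
qed

lemma Om_rect:
  assumes "A \<in> sets borel" "B \<in> sets borel"
  shows "measure Om (A \<times> B) = measure M0 A * measure M0 B"
proof -
  have "emeasure Om (A \<times> B) = emeasure M0 A * emeasure M0 B"
    unfolding Om_def by (rule M0.emeasure_pair_measure_Times) (use assms in auto)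
  then show ?thesis
    by (simp add: measure_def enn2real_mult)
qed

lemma coord_rect:
  assumes P: "{x. P x} \<in> sets borel" and Q: "{x. Q x} \<in> sets borel"
  shows "measure Om {\<omega>. P (coord j \<omega>) \<and> Q (coord (j + 1) \<omega>)} = measure M0 {x. P x} * measure M0 {x. Q x}"
proof (cases "even j")
  case True
  then have "{\<omega>. P (coord j \<omega>) \<and> Q (coord (j + 1) \<omega>)} = {x. P x} \<times> {x. Q x}"
    by (auto simp: coord_def)
  then show ?thesis using Om_rect[OF P Q] by simp
next
  case False
  then have "{\<omega>. P (coord j \<omega>) \<and> Q (coord (j + 1) \<omega>)} = {x. Q x} \<times> {x. P x}"
    by (auto simp: coord_def)
  then show ?thesis using Om_rect[OF Q P] by simp
qed

lemma cut_coord: "cut s k \<omega> = real_of_int k * (5 * s / 11) + (s / 11) * clamp (coord k \<omega>)"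
  by (simp add: cut_def)

lemma coord_par: "coord (j - 1) \<omega> = coord (j + 1) \<omega>"
  by (simp add: coord_def)

lemma M0_UNIV: "measure M0 UNIV = 1"
  using M0.prob_space by simp

lemma E1:
  assumes s: "s > 0" and uv: "u < v"
  shows "measure Om {\<omega>. u < cut s j \<omega> \<and> cut s j \<omega> \<le> v} \<le> 11 * (v - u) / s"
proof -
  define K where "K = real_of_int j * (5 * s / 11)"
  define P where "P = (\<lambda>x. u < K + (s / 11) * clamp x \<and> K + (s / 11) * clamp x \<le> v)"
  have "{\<omega>. u < cut s j \<omega> \<and> cut s j \<omega> \<le> v} = {\<omega>. P (coord j \<omega>) \<and> (\<lambda>_. True) (coord (j + 1) \<omega>)}"
    by (simp add: cut_coord P_def K_def)
  moreover have PB: "{x. P x} \<in> sets borel" unfolding P_def by measurable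
  ultimately have "measure Om {\<omega>. u < cut s j \<omega> \<and> cut s j \<omega> \<le> v} = measure M0 {x. P x} * measure M0 {x. True}"
    using coord_rect[OF PB, of "\<lambda>_. True" j] by simp
  also have "\<dots> = measure M0 {x. P x}" using M0_UNIV by simp
  also have "\<dots> \<le> (v - u) / (s / 11)"
    by (rule M0_bound[OF _ _ PB, where K=K]) (use s uv in \<open>auto simp: P_def\<close>)
  also have "\<dots> = 11 * (v - u) / s" using s by (simp add: field_simps)
  finally show ?thesis .
qed

lemma E2:
  assumes s: "s > 0" and uv: "u < v" and e: "\<epsilon> > 0" and Z: "finite Z"
  shows "measure Om {\<omega>. (u < cut s j \<omega> \<and> cut s j \<omega> \<le> v) \<and>
      (\<exists>z\<in>Z. \<bar>z - cut s (j - 1) \<omega>\<bar> < 2 * \<epsilon> * s \<or> \<bar>z - cut s (j + 1) \<omega>\<bar> < 2 * \<epsilon> * s)}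
    \<le> (11 * (v - u) / s) * (real (card Z) * (88 * \<epsilon>))"
proof -
  define K where "K = real_of_int j * (5 * s / 11)"
  define K1 where "K1 = real_of_int (j - 1) * (5 * s / 11)"
  define K2 where "K2 = real_of_int (j + 1) * (5 * s / 11)"
  define P where "P = (\<lambda>x. u < K + (s / 11) * clamp x \<and> K + (s / 11) * clamp x \<le> v)"
  define A where "A = (\<lambda>z. {y. \<bar>z - (K1 + (s / 11) * clamp y)\<bar> < 2 * \<epsilon> * s})"
  define B where "B = (\<lambda>z. {y. \<bar>z - (K2 + (s / 11) * clamp y)\<bar> < 2 * \<epsilon> * s})"
  define Q where "Q = (\<lambda>y. \<exists>z\<in>Z. \<bar>z - (K1 + (s / 11) * clamp y)\<bar> < 2 * \<epsilon> * s \<or> \<bar>z - (K2 + (s / 11) * clamp y)\<bar> < 2 * \<epsilon> * s)"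
  have "{\<omega>. (u < cut s j \<omega> \<and> cut s j \<omega> \<le> v) \<and>
      (\<exists>z\<in>Z. \<bar>z - cut s (j - 1) \<omega>\<bar> < 2 * \<epsilon> * s \<or> \<bar>z - cut s (j + 1) \<omega>\<bar> < 2 * \<epsilon> * s)}
     = {\<omega>. P (coord j \<omega>) \<and> Q (coord (j + 1) \<omega>)}"
    unfolding cut_coord P_def Q_def K_def K1_def K2_def coord_par by simp
  moreover have PB: "{x. P x} \<in> sets borel" unfolding P_def by measurable
  moreover have AB: "\<And>z. A z \<in> sets borel" unfolding A_def by measurable
  moreover have BB: "\<And>z. B z \<in> sets borel" unfolding B_def by measurable
  moreover have Qeq: "{x. Q x} = (\<Union>z\<in>Z. A z \<union> B z)" by (auto simp: Q_def A_def B_def)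
  ultimately have QB: "{x. Q x} \<in> sets borel" using Z by auto
  have m: "measure Om {\<omega>. (u < cut s j \<omega> \<and> cut s j \<omega> \<le> v) \<and>
      (\<exists>z\<in>Z. \<bar>z - cut s (j - 1) \<omega>\<bar> < 2 * \<epsilon> * s \<or> \<bar>z - cut s (j + 1) \<omega>\<bar> < 2 * \<epsilon> * s)}
     = measure M0 {x. P x} * measure M0 {x. Q x}"
    using coord_rect[OF PB QB, of j] \<open>{\<omega>. _} = {\<omega>. P (coord j \<omega>) \<and> Q (coord (j + 1) \<omega>)}\<close> by simp
  have mP: "measure M0 {x. P x} \<le> 11 * (v - u) / s"
  proof -
    have "measure M0 {x. P x} \<le> (v - u) / (s / 11)"
      by (rule M0_bound[OF _ _ PB, where K=K]) (use s uv in \<open>auto simp: P_def\<close>)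
    also have "\<dots> = 11 * (v - u) / s" using s by (simp add: field_simps)
    finally show ?thesis .
  qed
  have mA: "measure M0 (A z) \<le> 44 * \<epsilon>" for z
  proof -
    have "measure M0 {y. \<bar>z - (K1 + (s / 11) * clamp y)\<bar> < 2 * \<epsilon> * s} \<le> ((z + 2 * \<epsilon> * s) - (z - 2 * \<epsilon> * s)) / (s / 11)"
      by (rule M0_bound[OF _ _ AB[of z, unfolded A_def], where K=K1]) (use s e in \<open>auto simp: abs_less_iff\<close>)
    also have "\<dots> = 44 * \<epsilon>" using s by (simp add: field_simps)
    finally show ?thesis by (simp add: A_def)
  qed
  have mB: "measure M0 (B z) \<le> 44 * \<epsilon>" for z
  proof -
    have "measure M0 {y. \<bar>z - (K2 + (s / 11) * clamp y)\<bar> < 2 * \<epsilon> * s} \<le> ((z + 2 * \<epsilon> * s) - (z - 2 * \<epsilon> * s)) / (s / 11)"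
      by (rule M0_bound[OF _ _ BB[of z, unfolded B_def], where K=K2]) (use s e in \<open>auto simp: abs_less_iff\<close>)
    also have "\<dots> = 44 * \<epsilon>" using s by (simp add: field_simps)
    finally show ?thesis by (simp add: B_def)
  qed
  have mQ: "measure M0 {x. Q x} \<le> real (card Z) * (88 * \<epsilon>)"
  proof -
    have "measure M0 {x. Q x} \<le> (\<Sum>z\<in>Z. measure M0 (A z \<union> B z))"
      unfolding Qeq by (rule measure_UNION_le[OF Z]) (use AB BB in auto)
    also have "\<dots> \<le> (\<Sum>z\<in>Z. 88 * \<epsilon>)"
    proof (rule sum_mono)
      fix z assume "z \<in> Z"
      have "measure M0 (A z \<union> B z) \<le> measure M0 (A z) + measure M0 (B z)"
        by (rule measure_Un_le) (use AB BB in auto)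
      then show "measure M0 (A z \<union> B z) \<le> 88 * \<epsilon>" using mA[of z] mB[of z] by linarith
    qed
    also have "\<dots> = real (card Z) * (88 * \<epsilon>)" by simp
    finally show ?thesis .
  qed
  show ?thesis unfolding m
    by (rule mult_mono[OF mP mQ]) (use s uv in auto)
qed

interpretation OmP: prob_space Om by (rule Om_prob)

definition sepset :: "real \<Rightarrow> real \<Rightarrow> update list \<Rightarrow> real \<Rightarrow> real \<Rightarrow> (real \<times> real) set" where
  "sepset s \<epsilon> xs u v = {\<omega> \<in> space Om. cluster (alg s \<epsilon> \<omega> xs) u \<noteq> cluster (alg s \<epsilon> \<omega> xs) v}"

lemma sepset_meas: "sepset s \<epsilon> xs u v \<in> sets Om"
  unfolding sepset_def by (rule alg_meas)

lemma Om_set: "{\<omega> \<in> space Om. P \<omega>} \<in> sets Om \<Longrightarrow> {\<omega>. P \<omega>} \<in> sets Om" by simp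

lemma floor_diff_bound:
  assumes s: "s > 0" and uv: "u < v" and d: "v - u \<le> r" and r: "r / (5 * s / 11) < real_of_int m"
  shows "\<lfloor>v / (5 * s / 11)\<rfloor> - \<lfloor>u / (5 * s / 11)\<rfloor> \<le> m"
proof -
  define L where "L = 5 * s / 11"
  have L: "L > 0" using s by (simp add: L_def)
  have f1: "real_of_int \<lfloor>v / L\<rfloor> \<le> v / L" by (rule of_int_floor_le)
  have f2: "u / L < real_of_int \<lfloor>u / L\<rfloor> + 1" by (rule real_of_int_floor_add_one_gt)
  have "v / L - u / L = (v - u) / L" by (simp add: diff_divide_distrib)
  also have "\<dots> \<le> r / L" using d L by (simp add: divide_right_mono)
  finally have "v / L - u / L \<le> r / L" .
  then have "real_of_int (\<lfloor>v / L\<rfloor> - \<lfloor>u / L\<rfloor>) < real_of_int m + 1" using f1 f2 r by (simp add: L_def[symmetric]; linarith)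
  then have "\<lfloor>v / L\<rfloor> - \<lfloor>u / L\<rfloor> < m + 1" by linarith
  then show ?thesis by (simp add: L_def)
qed

lemma card_J: "\<lfloor>v / (5 * s / 11)\<rfloor> - \<lfloor>u / (5 * s / 11)\<rfloor> \<le> m \<Longrightarrow> 0 \<le> m \<Longrightarrow>
   real (card {\<lfloor>u / (5 * s / 11)\<rfloor>..\<lfloor>v / (5 * s / 11)\<rfloor>}) \<le> real_of_int (m + 1)"
  by simp

lemma sepC:
  assumes s: "s > 0" and uv: "u < v" and al: "u \<in> alive xs" "v \<in> alive xs" and d: "v - u \<le> s"
  shows "measure Om (sepset s \<epsilon> xs u v) \<le> 44 * (v - u) / s"
proof -
  define J where "J = {\<lfloor>u / (5 * s / 11)\<rfloor>..\<lfloor>v / (5 * s / 11)\<rfloor>}"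
  define E where "E = (\<lambda>j. {\<omega>. u < cut s j \<omega> \<and> cut s j \<omega> \<le> v})"
  have EB: "E j \<in> sets Om" for j unfolding E_def by (rule Om_set) measurable
  have sub: "sepset s \<epsilon> xs u v \<subseteq> (\<Union>j\<in>J. E j)"
    using sep_cover1[OF s uv al] unfolding sepset_def J_def E_def by blast
  have "measure Om (sepset s \<epsilon> xs u v) \<le> measure Om (\<Union>j\<in>J. E j)"
    by (rule OmP.finite_measure_mono[OF sub]) (use EB J_def in auto)
  also have "\<dots> \<le> (\<Sum>j\<in>J. measure Om (E j))"
    by (rule measure_UNION_le) (use EB J_def in auto)
  also have "\<dots> \<le> (\<Sum>j\<in>J. 11 * (v - u) / s)"
    by (rule sum_mono) (unfold E_def, rule E1[OF s uv])
  also have "\<dots> = real (card J) * (11 * (v - u) / s)" by simp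
  also have "\<dots> \<le> 4 * (11 * (v - u) / s)"
  proof (rule mult_right_mono)
    have "s / (5 * s / 11) < real_of_int 3" using s by (simp add: field_simps)
    from floor_diff_bound[OF s uv d this] have "real (card J) \<le> real_of_int (3 + 1)"
      unfolding J_def by (intro card_J) auto
    then show "real (card J) \<le> 4" by simp
    show "0 \<le> 11 * (v - u) / s" using s uv by simp
  qed
  finally show ?thesis by simp
qed

lemma sepD:
  assumes s: "s > 0" and e: "\<epsilon> > 0" and e3: "\<epsilon> \<le> 1/3" and uv: "u < v" and al: "u \<in> alive xs" "v \<in> alive xs"
    and d: "v - u \<le> \<epsilon> * s" and n: "card (arrived xs) \<le> n"
  shows "measure Om (sepset s \<epsilon> xs u v) \<le> 2 * ((11 * (v - u) / s) * (real n * (88 * \<epsilon>)))"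
proof -
  define J where "J = {\<lfloor>u / (5 * s / 11)\<rfloor>..\<lfloor>v / (5 * s / 11)\<rfloor>}"
  define Z where "Z = arrived xs"
  have Z: "finite Z" by (simp add: Z_def finite_arrived)
  define E where "E = (\<lambda>j. {\<omega>. (u < cut s j \<omega> \<and> cut s j \<omega> \<le> v) \<and>
      (\<exists>z\<in>Z. \<bar>z - cut s (j - 1) \<omega>\<bar> < 2 * \<epsilon> * s \<or> \<bar>z - cut s (j + 1) \<omega>\<bar> < 2 * \<epsilon> * s)})"
  have EB: "E j \<in> sets Om" for j
  proof -
    have "E j = {\<omega>. u < cut s j \<omega> \<and> cut s j \<omega> \<le> v} \<inter>
      (\<Union>z\<in>Z. {\<omega>. \<bar>z - cut s (j - 1) \<omega>\<bar> < 2 * \<epsilon> * s} \<union> {\<omega>. \<bar>z - cut s (j + 1) \<omega>\<bar> < 2 * \<epsilon> * s})"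
      unfolding E_def by auto
    also have "\<dots> \<in> sets Om"
    proof (intro sets.Int sets.finite_UN sets.Un Z)
      show "{\<omega>. u < cut s j \<omega> \<and> cut s j \<omega> \<le> v} \<in> sets Om" by (rule Om_set) measurable
      fix z
      show "{\<omega>. \<bar>z - cut s (j - 1) \<omega>\<bar> < 2 * \<epsilon> * s} \<in> sets Om" by (rule Om_set) measurable
      show "{\<omega>. \<bar>z - cut s (j + 1) \<omega>\<bar> < 2 * \<epsilon> * s} \<in> sets Om" by (rule Om_set) measurable
    qed
    finally show ?thesis .
  qed
  have es: "\<epsilon> * s \<le> s / 3" using e3 s by (simp add: field_simps)
  have "0 < \<epsilon> * s" using e s by (simp add: mult_pos_pos)
  then have close: "v - u < 2 * \<epsilon> * s" using d by linarith
  have eps: "v - u < 4 * s / 11" using d es s by linarith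
  have sub: "sepset s \<epsilon> xs u v \<subseteq> (\<Union>j\<in>J. E j)"
    using sep_cover2[OF s uv al close eps] unfolding sepset_def J_def E_def Z_def by blast
  have "measure Om (sepset s \<epsilon> xs u v) \<le> measure Om (\<Union>j\<in>J. E j)"
    by (rule OmP.finite_measure_mono[OF sub]) (use EB J_def in auto)
  also have "\<dots> \<le> (\<Sum>j\<in>J. measure Om (E j))"
    by (rule measure_UNION_le) (use EB J_def in auto)
  also have "\<dots> \<le> (\<Sum>j\<in>J. (11 * (v - u) / s) * (real n * (88 * \<epsilon>)))"
  proof (rule sum_mono)
    fix j
    have "measure Om (E j) \<le> (11 * (v - u) / s) * (real (card Z) * (88 * \<epsilon>))"
      unfolding E_def by (rule E2[OF s uv e Z])
    also have "\<dots> \<le> (11 * (v - u) / s) * (real n * (88 * \<epsilon>))"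
      using n s uv e by (intro mult_left_mono mult_right_mono) (auto simp: Z_def)
    finally show "measure Om (E j) \<le> (11 * (v - u) / s) * (real n * (88 * \<epsilon>))" .
  qed
  also have "\<dots> = real (card J) * ((11 * (v - u) / s) * (real n * (88 * \<epsilon>)))" by simp
  also have "\<dots> \<le> 2 * ((11 * (v - u) / s) * (real n * (88 * \<epsilon>)))"
  proof (rule mult_right_mono)
    have "s / 3 / (5 * s / 11) < real_of_int 1" using s by (simp add: field_simps)
    from floor_diff_bound[OF s uv _ this] d es have "real (card J) \<le> real_of_int (1 + 1)"
      unfolding J_def by (intro card_J) auto
    then show "real (card J) \<le> 2" by simp
    show "0 \<le> (11 * (v - u) / s) * (real n * (88 * \<epsilon>))" using s uv e by simp
  qed
  finally show ?thesis .
qed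

definition Gs :: "real \<Rightarrow> real \<Rightarrow> (update list \<Rightarrow> real set set) set" where
  "Gs s \<epsilon> = range (alg s \<epsilon>)"

definition Es :: "real \<Rightarrow> real \<Rightarrow> (update list \<Rightarrow> real set set) set set" where
  "Es s \<epsilon> = {{A \<in> Gs s \<epsilon>. cluster (A xs) u \<noteq> cluster (A xs) v} | xs u v. True}"

definition Ns where "Ns s \<epsilon> = measure_of (Gs s \<epsilon>) (Es s \<epsilon>) (\<lambda>_. 0)"

definition Mbig where "Mbig s \<epsilon> = distr Om (Ns s \<epsilon>) (alg s \<epsilon>)"

lemma Es_sub: "Es s \<epsilon> \<subseteq> Pow (Gs s \<epsilon>)" by (auto simp: Es_def)

lemma alg_measurable: "alg s \<epsilon> \<in> measurable Om (Ns s \<epsilon>)"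
  unfolding Ns_def
proof (rule measurable_measure_of[OF Es_sub])
  show "alg s \<epsilon> \<in> space Om \<rightarrow> Gs s \<epsilon>" by (auto simp: Gs_def)
  fix y assume "y \<in> Es s \<epsilon>"
  then obtain xs u v where y: "y = {A \<in> Gs s \<epsilon>. cluster (A xs) u \<noteq> cluster (A xs) v}" by (auto simp: Es_def)
  have "alg s \<epsilon> -` y \<inter> space Om = {\<omega> \<in> space Om. cluster (alg s \<epsilon> \<omega> xs) u \<noteq> cluster (alg s \<epsilon> \<omega> xs) v}"
    by (auto simp: y Gs_def)
  also have "\<dots> \<in> sets Om" by (rule alg_meas)
  finally show "alg s \<epsilon> -` y \<inter> space Om \<in> sets Om" .
qed

lemma space_Mbig: "space (Mbig s \<epsilon>) = Gs s \<epsilon>"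
  by (simp add: Mbig_def Ns_def space_measure_of[OF Es_sub])

lemma sets_Mbig: "sets (Mbig s \<epsilon>) = sets (Ns s \<epsilon>)"
  by (simp add: Mbig_def)

lemma sep_in_sets: "sep_event (Mbig s \<epsilon>) xs u v \<in> sets (Mbig s \<epsilon>)"
proof -
  have "sep_event (Mbig s \<epsilon>) xs u v \<in> Es s \<epsilon>"
    unfolding sep_event_def space_Mbig Es_def by blast
  then show ?thesis unfolding sets_Mbig Ns_def using Es_sub by (rule in_measure_of[rotated])
qed

lemma Mbig_prob: "prob_space (Mbig s \<epsilon>)"
  unfolding Mbig_def by (rule OmP.prob_space_distr[OF alg_measurable])

lemma measure_sep: "measure (Mbig s \<epsilon>) (sep_event (Mbig s \<epsilon>) xs u v) = measure Om (sepset s \<epsilon> xs u v)"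
proof -
  have "measure (Mbig s \<epsilon>) (sep_event (Mbig s \<epsilon>) xs u v) =
     measure Om (alg s \<epsilon> -` sep_event (Mbig s \<epsilon>) xs u v \<inter> space Om)"
    unfolding Mbig_def by (rule measure_distr[OF alg_measurable]) (use sep_in_sets[of s \<epsilon> xs u v] in \<open>simp add: Mbig_def\<close>)
  also have "alg s \<epsilon> -` sep_event (Mbig s \<epsilon>) xs u v \<inter> space Om = sepset s \<epsilon> xs u v"
    by (auto simp: sep_event_def space_Mbig sepset_def Gs_def)
  finally show ?thesis .
qed

lemma sep_event_sym: "sep_event M xs u v = sep_event M xs v u"
  by (auto simp: sep_event_def)

lemma sepset_refl: "sepset s \<epsilon> xs u u = {}" by (simp add: sepset_def)

lemma big_case:
  assumes s: "s > 0" and e: "\<epsilon> > 0" and e3: "\<epsilon> \<le> 1/3"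
  shows "prob_online_partition n s (Mbig s \<epsilon>) \<and>
        (\<forall>xs. card (arrived xs) \<le> n \<longrightarrow>
           smooth_at (Mbig s \<epsilon>) s 44 \<epsilon> (44 * real n * \<epsilon>) xs \<and>
           ((\<forall>a\<in>arrived xs. \<forall>b\<in>arrived xs. \<not> (\<epsilon> * s \<le> \<bar>a - b\<bar> \<and> \<bar>a - b\<bar> \<le> s))
              \<longrightarrow> zero_smooth_at (Mbig s \<epsilon>) s xs))"
proof (intro conjI allI impI)
  show "prob_online_partition n s (Mbig s \<epsilon>)"
    unfolding prob_online_partition_def
    using Mbig_prob sep_in_sets alg_online[OF s] by (auto simp: space_Mbig Gs_def)
next
  fix xs assume n: "card (arrived xs) \<le> n"
  have lt: "measure (Mbig s \<epsilon>) (sep_event (Mbig s \<epsilon>) xs u v) \<le> 44 * \<bar>u - v\<bar> / s \<and>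
            (\<bar>u - v\<bar> \<le> \<epsilon> * s \<longrightarrow> measure (Mbig s \<epsilon>) (sep_event (Mbig s \<epsilon>) xs u v) \<le> 44 * (44 * real n * \<epsilon>) * \<bar>u - v\<bar> / s)"
    if uv: "u < v" and al: "u \<in> alive xs" "v \<in> alive xs" and d: "\<bar>u - v\<bar> \<le> s" for u v
  proof (intro conjI impI)
    have "measure Om (sepset s \<epsilon> xs u v) \<le> 44 * (v - u) / s" using sepC[OF s uv al] d uv by simp
    then show "measure (Mbig s \<epsilon>) (sep_event (Mbig s \<epsilon>) xs u v) \<le> 44 * \<bar>u - v\<bar> / s"
      using uv by (simp add: measure_sep)
    assume dd: "\<bar>u - v\<bar> \<le> \<epsilon> * s"
    have "measure Om (sepset s \<epsilon> xs u v) \<le> 2 * ((11 * (v - u) / s) * (real n * (88 * \<epsilon>)))"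
      using sepD[OF s e e3 uv al _ n] dd uv by simp
    also have "\<dots> = 44 * (44 * real n * \<epsilon>) * \<bar>u - v\<bar> / s" using uv by (simp add: field_simps)
    finally show "measure (Mbig s \<epsilon>) (sep_event (Mbig s \<epsilon>) xs u v) \<le> 44 * (44 * real n * \<epsilon>) * \<bar>u - v\<bar> / s"
      by (simp add: measure_sep)
  qed
  show "smooth_at (Mbig s \<epsilon>) s 44 \<epsilon> (44 * real n * \<epsilon>) xs"
    unfolding smooth_at_def
  proof (intro ballI conjI impI)
    fix u v assume al: "u \<in> alive xs" "v \<in> alive xs"
    {
      assume d: "\<bar>u - v\<bar> \<le> s"
      consider "u < v" | "u = v" | "v < u" by linarith
      then have "measure (Mbig s \<epsilon>) (sep_event (Mbig s \<epsilon>) xs u v) \<le> 44 * \<bar>u - v\<bar> / s \<and>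
            (\<bar>u - v\<bar> \<le> \<epsilon> * s \<longrightarrow> measure (Mbig s \<epsilon>) (sep_event (Mbig s \<epsilon>) xs u v) \<le> 44 * (44 * real n * \<epsilon>) * \<bar>u - v\<bar> / s)"
      proof cases
        case 1 then show ?thesis using lt[OF 1 al d] by simp
      next
        case 2 then show ?thesis by (simp add: measure_sep sepset_refl)
      next
        case 3 then show ?thesis using lt[OF 3 al(2,1)] d by (simp add: sep_event_sym[of _ xs u v] abs_minus_commute)
      qed
    } note main = this
    show "\<bar>u - v\<bar> \<le> s \<Longrightarrow> measure (Mbig s \<epsilon>) (sep_event (Mbig s \<epsilon>) xs u v) \<le> 44 * \<bar>u - v\<bar> / s"
      using main by blast
    assume d: "\<bar>u - v\<bar> \<le> \<epsilon> * s"
    have "\<epsilon> * s \<le> s" using e3 s by (simp add: field_simps)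
    then have "\<bar>u - v\<bar> \<le> s" using d by linarith
    then show "measure (Mbig s \<epsilon>) (sep_event (Mbig s \<epsilon>) xs u v) \<le> 44 * (44 * real n * \<epsilon>) * \<bar>u - v\<bar> / s"
      using main d by blast
  qed
next
  fix xs assume n: "card (arrived xs) \<le> n"
    and H: "\<forall>a\<in>arrived xs. \<forall>b\<in>arrived xs. \<not> (\<epsilon> * s \<le> \<bar>a - b\<bar> \<and> \<bar>a - b\<bar> \<le> s)"
  show "zero_smooth_at (Mbig s \<epsilon>) s xs"
    unfolding zero_smooth_at_def
  proof (intro ballI impI)
    fix u v assume al: "u \<in> alive xs" "v \<in> alive xs" and d: "\<bar>u - v\<bar> \<le> s"
    have "sepset s \<epsilon> xs u v = {}"
      using zero_all[OF s e e3 H al d] by (auto simp: sepset_def)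
    then show "measure (Mbig s \<epsilon>) (sep_event (Mbig s \<epsilon>) xs u v) = 0" by (simp add: measure_sep)
  qed
qed

definition g2 :: "real \<Rightarrow> update list \<Rightarrow> real \<Rightarrow> real" where
  "g2 s xs y = (if diameter (alive xs) \<le> s then 0 else y)"

definition A2 :: "real \<Rightarrow> update list \<Rightarrow> real set set" where
  "A2 s xs = (\<lambda>x. {y \<in> alive xs. g2 s xs y = g2 s xs x}) ` alive xs"

lemma A2_cluster: "x \<in> alive xs \<Longrightarrow> cluster (A2 s xs) x = {y \<in> alive xs. g2 s xs y = g2 s xs x}"
  unfolding A2_def by (rule label_cluster)

lemma A2_cluster_eq: "x \<in> alive xs \<Longrightarrow> y \<in> alive xs \<Longrightarrow>
   cluster (A2 s xs) x = cluster (A2 s xs) y \<longleftrightarrow> g2 s xs x = g2 s xs y"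
proof -
  assume x: "x \<in> alive xs" and y: "y \<in> alive xs"
  have "{z \<in> alive xs. g2 s xs z = g2 s xs x} = {z \<in> alive xs. g2 s xs z = g2 s xs y} \<longleftrightarrow> g2 s xs x = g2 s xs y"
  proof
    assume "{z \<in> alive xs. g2 s xs z = g2 s xs x} = {z \<in> alive xs. g2 s xs z = g2 s xs y}"
    then have "x \<in> {z \<in> alive xs. g2 s xs z = g2 s xs y}" using x by blast
    then show "g2 s xs x = g2 s xs y" by simp
  qed simp
  then show ?thesis using A2_cluster[OF x] A2_cluster[OF y] by simp
qed

lemma two_points: "finite S \<Longrightarrow> card S \<le> 2 \<Longrightarrow> u \<in> S \<Longrightarrow> v \<in> S \<Longrightarrow> u \<noteq> v \<Longrightarrow> S = {u, v}"
proof -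
  assume f: "finite S" and c: "card S \<le> 2" and uv: "u \<in> S" "v \<in> S" "u \<noteq> v"
  have "{u, v} \<subseteq> S" using uv by auto
  moreover have "card S \<le> card {u, v}" using c uv by simp
  ultimately show "S = {u, v}" using card_seteq[OF f] by blast
qed

lemma finite_alive: "finite (alive xs)" using finite_subset[OF alive_sub_arrived finite_arrived] .

lemma diam2: "\<bar>u - v\<bar> \<le> s \<Longrightarrow> diameter {u, v :: real} \<le> s"
  by (rule diameter_le) (auto simp: abs_minus_commute)

lemma small_together:
  assumes n: "card (arrived xs) \<le> 2" and al: "u \<in> alive xs" "v \<in> alive xs" and d: "\<bar>u - v\<bar> \<le> s"
  shows "cluster (A2 s xs) u = cluster (A2 s xs) v"
proof (cases "u = v")
  case True then show ?thesis by simp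
next
  case False
  have ar: "arrived xs = {u, v}" using two_points[OF finite_arrived n] al alive_sub_arrived False by blast
  have "alive xs = {u, v}" using ar al alive_sub_arrived by blast
  then have "diameter (alive xs) \<le> s" using diam2[OF d] by simp
  then show ?thesis using A2_cluster_eq[OF al] by (simp add: g2_def)
qed

lemma A2_online: assumes s: "s > 0" and n: "n \<le> 2" shows "online_mono_partition n s (A2 s)"
  unfolding online_mono_partition_def
proof (intro conjI allI impI ballI)
  fix xs :: "update list"
  show "partition_on (alive xs) (A2 s xs)" unfolding A2_def by (rule label_partition)
  show "s_bounded s (A2 s xs)" unfolding s_bounded_def
  proof
    fix C assume "C \<in> A2 s xs"
    then obtain x where x: "x \<in> alive xs" and C: "C = {y \<in> alive xs. g2 s xs y = g2 s xs x}"
      by (auto simp: A2_def)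
    show "diameter C \<le> s"
    proof (cases "diameter (alive xs) \<le> s")
      case True
      then have "C = alive xs" by (simp add: C g2_def)
      then show ?thesis using True by simp
    next
      case False
      then have "C = {x}" using x by (auto simp: C g2_def)
      then show ?thesis using s by simp
    qed
  qed
next
  fix xs x u w
  assume c: "card (arrived (xs @ [x])) \<le> n" and u: "u \<in> alive xs \<inter> alive (xs @ [x])"
    and w: "w \<in> alive xs \<inter> alive (xs @ [x])"
    and eq: "cluster (A2 s xs) u = cluster (A2 s xs) w"
  show "cluster (A2 s (xs @ [x])) u = cluster (A2 s (xs @ [x])) w"
  proof (cases "u = w")
    case True then show ?thesis by simp
  next
    case False
    have "g2 s xs u = g2 s xs w" using eq A2_cluster_eq[of u xs w s] u w by blast
    then have dm: "diameter (alive xs) \<le> s" using False by (auto simp: g2_def split: if_splits)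
    have "\<bar>u - w\<bar> \<le> diameter (alive xs)"
      using diameter_bounded_bound[of "alive xs" u w] finite_alive[of xs] finite_imp_bounded u w
      by (auto simp: dist_real_def)
    then have "\<bar>u - w\<bar> \<le> s" using dm by linarith
    moreover have "card (arrived (xs @ [x])) \<le> 2" using c n by simp
    ultimately show ?thesis using small_together[of "xs @ [x]" u w s] u w by blast
  qed
qed

definition Msmall where "Msmall s = return (count_space {A2 s}) (A2 s)"

lemma small_case:
  assumes s: "s > 0" and n: "n \<le> 2" and e: "\<epsilon> > 0" and e1: "\<epsilon> \<le> 1"
  shows "prob_online_partition n s (Msmall s) \<and>
        (\<forall>xs. card (arrived xs) \<le> n \<longrightarrow>
           smooth_at (Msmall s) s 44 \<epsilon> (44 * real n * \<epsilon>) xs \<and>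
           ((\<forall>a\<in>arrived xs. \<forall>b\<in>arrived xs. \<not> (\<epsilon> * s \<le> \<bar>a - b\<bar> \<and> \<bar>a - b\<bar> \<le> s))
              \<longrightarrow> zero_smooth_at (Msmall s) s xs))"
proof -
  have sp: "space (Msmall s) = {A2 s}" by (simp add: Msmall_def)
  have st: "sets (Msmall s) = Pow {A2 s}" by (simp add: Msmall_def)
  have zero: "measure (Msmall s) (sep_event (Msmall s) xs u v) = 0"
    if "card (arrived xs) \<le> n" "u \<in> alive xs" "v \<in> alive xs" "\<bar>u - v\<bar> \<le> s" for xs u v
  proof -
    have "sep_event (Msmall s) xs u v = {}"
      using small_together[of xs u v s] that n by (auto simp: sep_event_def sp)
    then show ?thesis by simp
  qed
  have es: "\<epsilon> * s \<le> s" using e1 s by (simp add: mult_le_cancel_right1)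
  show ?thesis
  proof (intro conjI allI impI)
    show "prob_online_partition n s (Msmall s)"
      unfolding prob_online_partition_def
      using A2_online[OF s n] by (auto simp: sp st Msmall_def sep_event_def intro!: prob_space_return)
  next
    fix xs assume c: "card (arrived xs) \<le> n"
    show "smooth_at (Msmall s) s 44 \<epsilon> (44 * real n * \<epsilon>) xs"
      unfolding smooth_at_def
    proof (intro ballI conjI impI)
      fix u v assume al: "u \<in> alive xs" "v \<in> alive xs"
      show "\<bar>u - v\<bar> \<le> s \<Longrightarrow> measure (Msmall s) (sep_event (Msmall s) xs u v) \<le> 44 * \<bar>u - v\<bar> / s"
        using zero[OF c al] s by simp
      assume "\<bar>u - v\<bar> \<le> \<epsilon> * s"
      then have "\<bar>u - v\<bar> \<le> s" using es by linarith
      then have "measure (Msmall s) (sep_event (Msmall s) xs u v) = 0" using zero[OF c al] by simp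
      moreover have "0 \<le> 44 * (44 * real n * \<epsilon>) * \<bar>u - v\<bar> / s" using s e by simp
      ultimately show "measure (Msmall s) (sep_event (Msmall s) xs u v) \<le> 44 * (44 * real n * \<epsilon>) * \<bar>u - v\<bar> / s"
        by linarith
    qed
    assume "\<forall>a\<in>arrived xs. \<forall>b\<in>arrived xs. \<not> (\<epsilon> * s \<le> \<bar>a - b\<bar> \<and> \<bar>a - b\<bar> \<le> s)"
    show "zero_smooth_at (Msmall s) s xs"
      unfolding zero_smooth_at_def using zero[OF c] by auto
  qed
qed

theorem mainTheorem16:
  shows "\<exists>\<delta>::real. \<exists>c::real. \<delta> > 0 \<and> c > 0 \<and>
    (\<forall>(n::nat) (s::real) (\<epsilon>::real). n \<ge> 1 \<longrightarrow> s > 0 \<longrightarrow> 0 < \<epsilon> \<longrightarrow> \<epsilon> \<le> 1 / real n \<longrightarrow>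
      (\<exists>M. prob_online_partition n s M \<and>
        (\<forall>xs. card (arrived xs) \<le> n \<longrightarrow>
           smooth_at M s \<delta> \<epsilon> (c * real n * \<epsilon>) xs \<and>
           ((\<forall>a\<in>arrived xs. \<forall>b\<in>arrived xs. \<not> (\<epsilon> * s \<le> \<bar>a - b\<bar> \<and> \<bar>a - b\<bar> \<le> s))
              \<longrightarrow> zero_smooth_at M s xs))))"
proof (intro exI[of _ 44] conjI allI impI)
  fix n :: nat and s \<epsilon> :: real
  assume n: "n \<ge> 1" and s: "s > 0" and e: "0 < \<epsilon>" and en: "\<epsilon> \<le> 1 / real n"
  show "\<exists>M. prob_online_partition n s M \<and>
        (\<forall>xs. card (arrived xs) \<le> n \<longrightarrow>
           smooth_at M s 44 \<epsilon> (44 * real n * \<epsilon>) xs \<and>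
           ((\<forall>a\<in>arrived xs. \<forall>b\<in>arrived xs. \<not> (\<epsilon> * s \<le> \<bar>a - b\<bar> \<and> \<bar>a - b\<bar> \<le> s))
              \<longrightarrow> zero_smooth_at M s xs))"
  proof (cases "n \<le> 2")
    case True
    have "1 / real n \<le> 1" using n by simp
    then have "\<epsilon> \<le> 1" using en by linarith
    then show ?thesis using small_case[OF s True e] by blast
  next
    case False
    then have "real n \<ge> 3" by simp
    then have "1 / real n \<le> 1 / 3" by (simp add: field_simps)
    then have "\<epsilon> \<le> 1 / 3" using en by linarith
    then show ?thesis using big_case[OF s e] by blast
  qed
qed simp_all

end
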